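(* Let $P=P(G,[\omega])$ be a toric poset and $I\subseteq V$. Then $I$ is a toric filter of $P$ if and only if its characteristic vector $\chi_I\in\{0,1\}^V\subseteq\mathbb{R}^V$ is a vertex of the order polytope $\mathcal{O}(P(G,\omega'))$ for some $\omega'\in[\omega]$.
   Context: Toric poset setup: $V=[n]$; $\mathrm{Acyc}(G)$ acyclic orientations; $P(G,\omega)$ the poset given by the transitive closure of $\omega$; $[\omega]$ the class under the equivalence generated by converting a source into a sink; toric chambers (components of $\mathbb{R}^V/\mathbb{Z}^V$ minus the hyperplanes $\{x_i\equiv x_j\bmod 1\}$, $\{i,j\}\in E$) correspond bijectively to classes $[\omega]$; $P(G,[\omega])$ is identified with its chamber $c(P)$. $D^{\mathrm{tor}}_\pi$ is the image in the torus of $\{x\in\mathbb{R}^V:x_i=x_j$ for $i,j$ in a common block of $\pi\}$. Toric filter: $I=\emptyset$, $I=V$, or $\emptyset\ne I\ne V$ with $\overline{c(P)}\cap D^{\mathrm{tor}}_{\{I,V\setminus I\}}$ two-dimensional. Order polytope: $\mathcal{O}(Q)=\{x\in[0,1]^V: x_i\le x_j$ whenever $i\le_Q j\}$. $\chi_I(k)=1$ if $k\in I$ and $0$ otherwise. *)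

theory Defs
  imports "HOL-Analysis.Analysis"
begin

text \<open>Vertex set V is the finite type 'n (so V = UNIV, n = CARD('n)); R^V is real^'n.
A simple graph G is a symmetric irreflexive edge relation E.\<close>

definition simple_graph :: "('n \<times> 'n) set \<Rightarrow> bool" where
  "simple_graph E \<longleftrightarrow> sym E \<and> irrefl E"

definition is_orientation :: "('n \<times> 'n) set \<Rightarrow> ('n \<times> 'n) set \<Rightarrow> bool" where
  "is_orientation E \<omega> \<longleftrightarrow> \<omega> \<subseteq> E \<and>
     (\<forall>i j. (i, j) \<in> E \<longrightarrow> ((i, j) \<in> \<omega> \<longleftrightarrow> (j, i) \<notin> \<omega>))"

definition Acyc :: "('n \<times> 'n) set \<Rightarrow> ('n \<times> 'n) set set" where
  "Acyc E = {\<omega>. is_orientation E \<omega> \<and> acyclic \<omega>}"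

definition is_source :: "('n \<times> 'n) set \<Rightarrow> 'n \<Rightarrow> bool" where
  "is_source \<omega> v \<longleftrightarrow> (\<forall>u. (u, v) \<notin> \<omega>)"

definition flip_at :: "('n \<times> 'n) set \<Rightarrow> 'n \<Rightarrow> ('n \<times> 'n) set" where
  "flip_at \<omega> v = {(a, b). (a, b) \<in> \<omega> \<and> a \<noteq> v \<and> b \<noteq> v} \<union> {(b, a). (a, b) \<in> \<omega> \<and> (a = v \<or> b = v)}"

definition source_sink_step :: "(('n \<times> 'n) set \<times> ('n \<times> 'n) set) set" where
  "source_sink_step = {(\<omega>, \<omega>'). \<exists>v. is_source \<omega> v \<and> \<omega>' = flip_at \<omega> v}"

definition toric_class :: "('n \<times> 'n) set \<Rightarrow> ('n \<times> 'n) set set" where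
  "toric_class \<omega> = {\<omega>'. (\<omega>, \<omega>') \<in> (source_sink_step \<union> source_sink_step\<inverse>)\<^sup>*}"

definition order_polytope :: "('n \<times> 'n) set \<Rightarrow> (real ^ 'n) set" where
  "order_polytope \<omega> = {x. (\<forall>i. 0 \<le> x $ i \<and> x $ i \<le> 1) \<and> (\<forall>i j. (i, j) \<in> \<omega>\<^sup>* \<longrightarrow> x $ i \<le> x $ j)}"

definition char_vec :: "'n::finite set \<Rightarrow> real ^ 'n" where
  "char_vec I = (\<chi> k. if k \<in> I then 1 else 0)"

text \<open>Orientation \<omega>(x) induced by a point x of the torus off the toric arrangement
(via fractional parts of a lift), as in Develin--Macauley--Reiner.\<close>
definition point_orientation :: "('n \<times> 'n) set \<Rightarrow> real ^ 'n \<Rightarrow> ('n \<times> 'n) set" where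
  "point_orientation E x = {(i, j). (i, j) \<in> E \<and> frac (x $ i) < frac (x $ j)}"

text \<open>Preimage in R^V of the toric chamber c(P(G,[\<omega>])) under R^V \<rightarrow> R^V/Z^V.\<close>
definition toric_chamber_lift :: "('n \<times> 'n) set \<Rightarrow> ('n \<times> 'n) set \<Rightarrow> (real ^ 'n) set" where
  "toric_chamber_lift E \<omega> = {x. (\<forall>i j. (i, j) \<in> E \<longrightarrow> frac (x $ i) \<noteq> frac (x $ j)) \<and>
                              point_orientation E x \<in> toric_class \<omega>}"

text \<open>Preimage in R^V of D^tor_{I, V-I}.\<close>
definition D_tor_lift :: "'n::finite set \<Rightarrow> (real ^ 'n) set" where
  "D_tor_lift I = {x. \<forall>i j. (i \<in> I \<longleftrightarrow> j \<in> I) \<longrightarrow> x $ i - x $ j \<in> \<int>}"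

definition has_dim :: "'a::euclidean_space set \<Rightarrow> int \<Rightarrow> bool" where
  "has_dim S d \<longleftrightarrow> (\<exists>C. convex C \<and> C \<subseteq> S \<and> aff_dim C = d) \<and>
                   (\<forall>C. convex C \<and> C \<subseteq> S \<longrightarrow> aff_dim C \<le> d)"

definition toric_filter :: "('n::finite \<times> 'n) set \<Rightarrow> ('n \<times> 'n) set \<Rightarrow> 'n set \<Rightarrow> bool" where
  "toric_filter E \<omega> I \<longleftrightarrow> I = {} \<or> I = UNIV \<or>
     (I \<noteq> {} \<and> I \<noteq> UNIV \<and> has_dim (closure (toric_chamber_lift E \<omega>) \<inter> D_tor_lift I) 2)"

end

theory Submission
  imports Defs
begin


definition ori :: "('n \<times> 'n) set \<Rightarrow> ('n \<Rightarrow> real) \<Rightarrow> ('n \<times> 'n) set" where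
  "ori E g = {(i,j). (i,j) \<in> E \<and> g i < g j}"

definition good :: "('n \<times> 'n) set \<Rightarrow> ('n \<Rightarrow> real) \<Rightarrow> bool" where
  "good E g \<longleftrightarrow> (\<forall>i j. (i,j) \<in> E \<longrightarrow> g i \<noteq> g j \<and> \<bar>g i - g j\<bar> < 1)"

lemma mem_flip: "(a,b) \<in> flip_at \<omega> v \<longleftrightarrow> ((a,b)\<in>\<omega> \<and> a\<noteq>v \<and> b\<noteq>v) \<or> ((b,a)\<in>\<omega> \<and> (a = v \<or> b = v))"
  by (auto simp: flip_at_def)

lemma mem_ori: "(a,b) \<in> ori E g \<longleftrightarrow> (a,b) \<in> E \<and> g a < g b"
  by (simp add: ori_def)

lemma flip_flip: "flip_at (flip_at \<omega> v) v = \<omega>"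
  by (auto simp: mem_flip)

lemma flip_src:
  assumes "sym E" "irrefl E" "good E g" "\<And>u. (u,v) \<in> E \<Longrightarrow> g v < g u"
  shows "flip_at (ori E g) v = ori E (g(v := g v + 1)) \<and> good E (g(v := g v + 1))"
proof -
  have s: "(a,b) \<in> E \<Longrightarrow> (b,a) \<in> E" for a b using assms(1) unfolding sym_def by blast
  have ir: "(a,a) \<notin> E" for a using assms(2) unfolding irrefl_def by blast
  have w: "(a,b) \<in> E \<Longrightarrow> g a \<noteq> g b \<and> \<bar>g a - g b\<bar> < 1" for a b using assms(3) unfolding good_def by blast
  have A: "(v,b) \<notin> flip_at (ori E g) v \<and> (v,b) \<notin> ori E (g(v := g v + 1))" for b
  proof -
    have "(b,v) \<notin> ori E g" using assms(4)[of b] s[of b v] by (auto simp: mem_ori)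
    moreover have "(v,b) \<notin> ori E (g(v := g v + 1))"
    proof
      assume "(v,b) \<in> ori E (g(v := g v + 1))"
      then have vb: "(v,b) \<in> E" and lt: "(g(v := g v + 1)) v < (g(v := g v + 1)) b" by (auto simp: mem_ori)
      have "b \<noteq> v" using vb ir by blast
      then have "g v + 1 < g b" using lt by simp
      with w[OF vb] show False by linarith
    qed
    ultimately show ?thesis by (auto simp: mem_flip)
  qed
  have B: "(a,v) \<in> flip_at (ori E g) v \<longleftrightarrow> (a,v) \<in> ori E (g(v := g v + 1))" if "a \<noteq> v" for a
  proof -
    have "(a,v) \<in> flip_at (ori E g) v \<longleftrightarrow> (v,a) \<in> E \<and> g v < g a" using that by (auto simp: mem_flip mem_ori)
    also have "\<dots> \<longleftrightarrow> (a,v) \<in> E"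
      using assms(4)[of a] s[of a v] s[of v a] by blast
    also have "\<dots> \<longleftrightarrow> (a,v) \<in> ori E (g(v := g v + 1))"
    proof
      assume av: "(a,v) \<in> E"
      have "g a < g v + 1" using w[OF av] by linarith
      then show "(a,v) \<in> ori E (g(v := g v + 1))" using av that by (simp add: mem_ori)
    qed (simp add: mem_ori)
    finally show ?thesis .
  qed
  have C: "(a,b) \<in> flip_at (ori E g) v \<longleftrightarrow> (a,b) \<in> ori E (g(v := g v + 1))" if "a \<noteq> v" "b \<noteq> v" for a b
    using that by (simp add: mem_flip mem_ori)
  have 1: "flip_at (ori E g) v = ori E (g(v := g v + 1))"
  proof (rule set_eqI, clarify)
    fix a b
    show "(a,b) \<in> flip_at (ori E g) v \<longleftrightarrow> (a,b) \<in> ori E (g(v := g v + 1))"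
      using A[of b] B[of a] C[of a b] by (cases "a = v"; cases "b = v") auto
  qed
  have 2: "good E (g(v := g v + 1))"
    unfolding good_def
  proof (intro allI impI)
    fix a b assume ab: "(a,b) \<in> E"
    have nab: "a \<noteq> b" using ab ir by blast
    show "(g(v := g v + 1)) a \<noteq> (g(v := g v + 1)) b \<and> \<bar>(g(v := g v + 1)) a - (g(v := g v + 1)) b\<bar> < 1"
    proof (cases "a = v")
      case True
      then have "g v < g b" "g b - g v < 1" using assms(4)[of b] s[OF ab] w[OF ab] by auto
      then show ?thesis using True nab by auto
    next
      case F: False
      show ?thesis
      proof (cases "b = v")
        case True
        then have "g v < g a" "g a - g v < 1" using assms(4)[of a] ab w[OF ab] by auto
        then show ?thesis using True F by auto
      qed (use F w[OF ab] in auto)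
    qed
  qed
  show ?thesis using 1 2 by blast
qed


lemma flip_snk:
  assumes "sym E" "irrefl E" "good E g" "\<And>u. (u,v) \<in> E \<Longrightarrow> g u < g v"
  shows "flip_at (ori E g) v = ori E (g(v := g v - 1)) \<and> good E (g(v := g v - 1))"
proof -
  have s: "(a,b) \<in> E \<Longrightarrow> (b,a) \<in> E" for a b using assms(1) unfolding sym_def by blast
  have ir: "(a,a) \<notin> E" for a using assms(2) unfolding irrefl_def by blast
  have w: "(a,b) \<in> E \<Longrightarrow> g a \<noteq> g b \<and> \<bar>g a - g b\<bar> < 1" for a b using assms(3) unfolding good_def by blast
  have A: "(a,v) \<notin> flip_at (ori E g) v \<and> (a,v) \<notin> ori E (g(v := g v - 1))" for a
  proof -
    have "(v,a) \<notin> ori E g" using assms(4)[of a] s[of v a] by (auto simp: mem_ori)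
    moreover have "(a,v) \<notin> ori E (g(v := g v - 1))"
    proof
      assume "(a,v) \<in> ori E (g(v := g v - 1))"
      then have vb: "(a,v) \<in> E" and lt: "(g(v := g v - 1)) a < (g(v := g v - 1)) v" by (auto simp: mem_ori)
      have "a \<noteq> v" using vb ir by blast
      then have "g a < g v - 1" using lt by simp
      with w[OF vb] show False by linarith
    qed
    ultimately show ?thesis by (auto simp: mem_flip)
  qed
  have B: "(v,b) \<in> flip_at (ori E g) v \<longleftrightarrow> (v,b) \<in> ori E (g(v := g v - 1))" if "b \<noteq> v" for b
  proof -
    have "(v,b) \<in> flip_at (ori E g) v \<longleftrightarrow> (b,v) \<in> E \<and> g b < g v" using that by (auto simp: mem_flip mem_ori)
    also have "\<dots> \<longleftrightarrow> (v,b) \<in> E"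
      using assms(4)[of b] s[of b v] s[of v b] by blast
    also have "\<dots> \<longleftrightarrow> (v,b) \<in> ori E (g(v := g v - 1))"
    proof
      assume av: "(v,b) \<in> E"
      have "g v - 1 < g b" using w[OF av] by linarith
      then show "(v,b) \<in> ori E (g(v := g v - 1))" using av that by (simp add: mem_ori)
    qed (simp add: mem_ori)
    finally show ?thesis .
  qed
  have C: "(a,b) \<in> flip_at (ori E g) v \<longleftrightarrow> (a,b) \<in> ori E (g(v := g v - 1))" if "a \<noteq> v" "b \<noteq> v" for a b
    using that by (simp add: mem_flip mem_ori)
  have 1: "flip_at (ori E g) v = ori E (g(v := g v - 1))"
  proof (rule set_eqI, clarify)
    fix a b
    show "(a,b) \<in> flip_at (ori E g) v \<longleftrightarrow> (a,b) \<in> ori E (g(v := g v - 1))"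
      using A[of a] B[of b] C[of a b] by (cases "a = v"; cases "b = v") auto
  qed
  have 2: "good E (g(v := g v - 1))"
    unfolding good_def
  proof (intro allI impI)
    fix a b assume ab: "(a,b) \<in> E"
    have nab: "a \<noteq> b" using ab ir by blast
    show "(g(v := g v - 1)) a \<noteq> (g(v := g v - 1)) b \<and> \<bar>(g(v := g v - 1)) a - (g(v := g v - 1)) b\<bar> < 1"
    proof (cases "a = v")
      case True
      then have "g b < g v" "g v - g b < 1" using assms(4)[of b] s[OF ab] w[OF ab] by auto
      then show ?thesis using True nab by auto
    next
      case F: False
      show ?thesis
      proof (cases "b = v")
        case True
        then have "g a < g v" "g v - g a < 1" using assms(4)[of a] ab w[OF ab] by auto
        then show ?thesis using True F by auto
      qed (use F w[OF ab] in auto)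
    qed
  qed
  show ?thesis using 1 2 by blast
qed

lemma good_src:
  assumes "good E g" "is_source (ori E g) v" "(u,v) \<in> E"
  shows "g v < g u"
proof -
  have "\<not> g u < g v" using assms(2,3) by (auto simp: is_source_def mem_ori)
  moreover have "g u \<noteq> g v" using assms(1,3) unfolding good_def by blast
  ultimately show ?thesis by linarith
qed

lemma real_step:
  assumes "sym E" "irrefl E" "(\<omega>1, \<omega>2) \<in> source_sink_step"
  shows "(\<exists>g. good E g \<and> \<omega>1 = ori E g) \<longrightarrow> (\<exists>g. good E g \<and> \<omega>2 = ori E g)"
    and "(\<exists>g. good E g \<and> \<omega>2 = ori E g) \<longrightarrow> (\<exists>g. good E g \<and> \<omega>1 = ori E g)"
proof -
  obtain v where src: "is_source \<omega>1 v" and w2: "\<omega>2 = flip_at \<omega>1 v"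
    using assms(3) unfolding source_sink_step_def by blast
  show "(\<exists>g. good E g \<and> \<omega>1 = ori E g) \<longrightarrow> (\<exists>g. good E g \<and> \<omega>2 = ori E g)"
  proof
    assume "\<exists>g. good E g \<and> \<omega>1 = ori E g"
    then obtain g where g: "good E g" "\<omega>1 = ori E g" by blast
    have "\<And>u. (u,v) \<in> E \<Longrightarrow> g v < g u" using good_src[OF g(1)] src g(2) by blast
    from flip_src[OF assms(1,2) g(1) this] show "\<exists>g. good E g \<and> \<omega>2 = ori E g" using w2 g(2) by metis
  qed
  show "(\<exists>g. good E g \<and> \<omega>2 = ori E g) \<longrightarrow> (\<exists>g. good E g \<and> \<omega>1 = ori E g)"
  proof
    assume "\<exists>g. good E g \<and> \<omega>2 = ori E g"
    then obtain g where g: "good E g" "\<omega>2 = ori E g" by blast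
    have w1: "\<omega>1 = flip_at \<omega>2 v" using w2 flip_flip by metis
    have snk: "g u < g v" if uv: "(u,v) \<in> E" for u
    proof -
      have vu: "(v,u) \<in> E" using assms(1) uv unfolding sym_def by blast
      have "(v,u) \<notin> \<omega>2"
        using src unfolding w2 by (auto simp: mem_flip is_source_def)
      then have "\<not> g v < g u" using vu g(2) by (auto simp: mem_ori)
      moreover have "g u \<noteq> g v" using g(1) uv unfolding good_def by blast
      ultimately show ?thesis by linarith
    qed
    from flip_snk[OF assms(1,2) g(1) snk] show "\<exists>g. good E g \<and> \<omega>1 = ori E g" using w1 g(2) by metis
  qed
qed

lemma realizable_class:
  assumes "sym E" "irrefl E" "good E g0" "\<omega>' \<in> toric_class (ori E g0)"
  shows "\<exists>g. good E g \<and> \<omega>' = ori E g"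
proof -
  have "(ori E g0, \<omega>') \<in> (source_sink_step \<union> source_sink_step\<inverse>)\<^sup>*"
    using assms(4) unfolding toric_class_def by blast
  then show ?thesis
  proof (induction rule: rtrancl_induct)
    case base
    then show ?case using assms(3) by blast
  next
    case (step y z)
    then show ?case using real_step[OF assms(1,2)] by blast
  qed
qed


lemma base_real:
  fixes E :: "('n::finite \<times> 'n) set"
  assumes "irrefl E" "\<omega> \<in> Acyc E"
  shows "\<exists>g. good E g \<and> \<omega> = ori E g"
proof -
  have or: "is_orientation E \<omega>" and ac: "acyclic \<omega>" using assms(2) unfolding Acyc_def by auto
  define N where "N = real (CARD('n) + 1)"
  define h where "h i = card {j. (j,i) \<in> \<omega>\<^sup>+}" for i
  define g where "g i = real (h i) / N" for i
  have Npos: "N > 0" unfolding N_def by simp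
  have hle: "h i \<le> CARD('n)" for i unfolding h_def by (simp add: card_mono)
  have g01: "0 \<le> g i \<and> g i < 1" for i
  proof -
    have "real (h i) < N" using hle[of i] unfolding N_def by linarith
    then show ?thesis unfolding g_def using Npos by (simp add: divide_less_eq)
  qed
  have hlt: "h i < h j" if "(i,j) \<in> \<omega>" for i j
  proof -
    have "{k. (k,i) \<in> \<omega>\<^sup>+} \<subset> {k. (k,j) \<in> \<omega>\<^sup>+}"
    proof
      show "{k. (k,i) \<in> \<omega>\<^sup>+} \<subseteq> {k. (k,j) \<in> \<omega>\<^sup>+}" using that by (simp add: subset_eq) (meson trancl_into_trancl)
      have "(i,j) \<in> \<omega>\<^sup>+" using that by blast
      moreover have "(i,i) \<notin> \<omega>\<^sup>+" using ac unfolding acyclic_def by blast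
      ultimately show "{k. (k,i) \<in> \<omega>\<^sup>+} \<noteq> {k. (k,j) \<in> \<omega>\<^sup>+}" by blast
    qed
    then show ?thesis unfolding h_def by (simp add: psubset_card_mono)
  qed
  have glt: "g i < g j" if "(i,j) \<in> \<omega>" for i j
    using hlt[OF that] Npos unfolding g_def by (simp add: divide_strict_right_mono)
  have sub: "\<omega> \<subseteq> E" and orr: "\<And>i j. (i,j) \<in> E \<Longrightarrow> ((i,j) \<in> \<omega> \<longleftrightarrow> (j,i) \<notin> \<omega>)"
    using or unfolding is_orientation_def by auto
  have good: "good E g"
    unfolding good_def
  proof (intro allI impI conjI)
    fix i j assume ij: "(i,j) \<in> E"
    show "g i \<noteq> g j"
    proof (cases "(i,j) \<in> \<omega>")
      case True then show ?thesis using glt by force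
    next
      case False then have "(j,i) \<in> \<omega>" using orr[OF ij] by blast
      then show ?thesis using glt by force
    qed
    show "\<bar>g i - g j\<bar> < 1" using g01[of i] g01[of j] by linarith
  qed
  have "\<omega> = ori E g"
  proof (rule set_eqI, clarify)
    fix i j
    show "(i,j) \<in> \<omega> \<longleftrightarrow> (i,j) \<in> ori E g"
    proof
      assume "(i,j) \<in> \<omega>" then show "(i,j) \<in> ori E g" using sub glt by (auto simp: mem_ori)
    next
      assume a: "(i,j) \<in> ori E g"
      then have ij: "(i,j) \<in> E" "g i < g j" by (auto simp: mem_ori)
      show "(i,j) \<in> \<omega>"
      proof (rule ccontr)
        assume "(i,j) \<notin> \<omega>"
        then have "(j,i) \<in> \<omega>" using orr[OF ij(1)] by blast
        then show False using glt[of j i] ij(2) by linarith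
      qed
    qed
  qed
  then show ?thesis using good by blast
qed

lemma lift_set:
  fixes E :: "('n::finite \<times> 'n) set"
  assumes "sym E" "irrefl E"
  shows "\<forall>g. good E g \<longrightarrow> (\<forall>i j. (i,j) \<in> E \<longrightarrow> i \<in> S \<longrightarrow> j \<notin> S \<longrightarrow> g i < g j) \<longrightarrow>
     (ori E g, ori E (\<lambda>i. g i + (if i \<in> S then 1 else 0))) \<in> source_sink_step\<^sup>*"
proof -
  have "finite S" by simp
  then show ?thesis
  proof (induction S rule: finite_remove_induct)
    case empty
    then show ?case by simp
  next
    case (remove A)
    show ?case
    proof (intro allI impI)
      fix g assume g: "good E g" and dc: "\<forall>i j. (i,j) \<in> E \<longrightarrow> i \<in> A \<longrightarrow> j \<notin> A \<longrightarrow> g i < g j"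
      have s: "(a,b) \<in> E \<Longrightarrow> (b,a) \<in> E" for a b using assms(1) unfolding sym_def by blast
      have w: "(a,b) \<in> E \<Longrightarrow> g a \<noteq> g b \<and> \<bar>g a - g b\<bar> < 1" for a b using g unfolding good_def by blast
      define v where "v = arg_min_on g A"
      have vA: "v \<in> A" unfolding v_def using arg_min_if_finite(1)[OF remove.hyps(1,2)] .
      have vmin: "g v \<le> g w" if "w \<in> A" for w unfolding v_def using arg_min_least[OF remove.hyps(1,2) that] .
      have vlt: "g v < g u" if uv: "(u,v) \<in> E" for u
      proof (cases "u \<in> A")
        case True
        then show ?thesis using vmin[OF True] w[OF uv] by linarith
      next
        case False
        then show ?thesis using dc s[OF uv] vA by blast
      qed
      define g1 where "g1 = g(v := g v + 1)"
      have fl: "flip_at (ori E g) v = ori E g1" and g1: "good E g1"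
        using flip_src[OF assms g vlt] unfolding g1_def by auto
      have src: "is_source (ori E g) v" unfolding is_source_def using vlt by (force simp: mem_ori)
      have st: "(ori E g, ori E g1) \<in> source_sink_step"
        unfolding source_sink_step_def using src fl by auto
      have dc1: "\<forall>i j. (i,j) \<in> E \<longrightarrow> i \<in> A - {v} \<longrightarrow> j \<notin> A - {v} \<longrightarrow> g1 i < g1 j"
      proof (intro allI impI)
        fix i j assume ij: "(i,j) \<in> E" and i: "i \<in> A - {v}" and j: "j \<notin> A - {v}"
        show "g1 i < g1 j"
        proof (cases "j = v")
          case True then show ?thesis using i w[OF ij] unfolding g1_def by auto
        next
          case False then show ?thesis using i j dc ij unfolding g1_def by auto
        qed
      qed
      have IH: "(ori E g1, ori E (\<lambda>i. g1 i + (if i \<in> A - {v} then 1 else 0))) \<in> source_sink_step\<^sup>*"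
        using remove.IH[OF vA] g1 dc1 by blast
      have eq: "(\<lambda>i. g1 i + (if i \<in> A - {v} then 1 else 0)) = (\<lambda>i. g i + (if i \<in> A then 1 else 0))"
        unfolding g1_def using vA by (auto simp: fun_eq_iff)
      show "(ori E g, ori E (\<lambda>i. g i + (if i \<in> A then 1 else 0))) \<in> source_sink_step\<^sup>*"
        using st IH unfolding eq by (meson converse_rtrancl_into_rtrancl)
    qed
  qed
qed



lemma char_vec_nth: "char_vec I $ k = (if k \<in> I then 1 else 0)"
  by (simp add: char_vec_def)

lemma extreme_char:
  fixes \<omega> :: "('n::finite \<times> 'n) set"
  shows "char_vec I extreme_point_of order_polytope \<omega> \<longleftrightarrow> (\<forall>i j. (i,j) \<in> \<omega> \<longrightarrow> i \<in> I \<longrightarrow> j \<in> I)"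
proof
  assume "char_vec I extreme_point_of order_polytope \<omega>"
  then have "char_vec I \<in> order_polytope \<omega>" unfolding extreme_point_of_def by blast
  then have le: "\<And>i j. (i,j) \<in> \<omega>\<^sup>* \<Longrightarrow> char_vec I $ i \<le> char_vec I $ j" unfolding order_polytope_def by blast
  show "\<forall>i j. (i,j) \<in> \<omega> \<longrightarrow> i \<in> I \<longrightarrow> j \<in> I"
  proof (intro allI impI)
    fix i j assume "(i,j) \<in> \<omega>" "i \<in> I"
    then have "char_vec I $ i \<le> char_vec I $ j" using le by blast
    then show "j \<in> I" using \<open>i \<in> I\<close> by (auto simp: char_vec_nth split: if_splits)
  qed
next
  assume up: "\<forall>i j. (i,j) \<in> \<omega> \<longrightarrow> i \<in> I \<longrightarrow> j \<in> I"
  have upr: "(i,j) \<in> \<omega>\<^sup>* \<Longrightarrow> i \<in> I \<Longrightarrow> j \<in> I" for i j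
  proof (induction rule: rtrancl_induct)
    case base then show ?case by simp
  next
    case (step y z) then show ?case using up by blast
  qed
  have mem: "char_vec I \<in> order_polytope \<omega>"
    unfolding order_polytope_def
  proof (intro CollectI conjI allI impI)
    fix i show "0 \<le> char_vec I $ i" "char_vec I $ i \<le> 1" by (auto simp: char_vec_nth)
  next
    fix i j assume "(i,j) \<in> \<omega>\<^sup>*"
    then show "char_vec I $ i \<le> char_vec I $ j" using upr by (auto simp: char_vec_nth)
  qed
  have noseg: "char_vec I \<notin> open_segment a b" if a: "a \<in> order_polytope \<omega>" and b: "b \<in> order_polytope \<omega>" for a b
  proof
    assume "char_vec I \<in> open_segment a b"
    then obtain u where ab: "a \<noteq> b" and u: "0 < u" "u < 1" and x: "char_vec I = (1 - u) *\<^sub>R a + u *\<^sub>R b"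
      unfolding in_segment by blast
    have "a $ k = b $ k" for k
    proof -
      have a01: "0 \<le> a $ k" "a $ k \<le> 1" using a unfolding order_polytope_def by auto
      have b01: "0 \<le> b $ k" "b $ k \<le> 1" using b unfolding order_polytope_def by auto
      have xk: "char_vec I $ k = (1 - u) * a $ k + u * b $ k" using arg_cong[OF x, of "\<lambda>v. v $ k"] by simp
      show ?thesis
      proof (cases "k \<in> I")
        case True
        then have e: "(1 - u) * a $ k + u * b $ k = 1" using xk by (simp add: char_vec_nth)
        have m1: "(1 - u) * a $ k \<le> (1 - u)" using a01 u by (simp add: mult_left_le)
        have m2: "u * b $ k \<le> u" using b01 u by (simp add: mult_left_le)
        have "a $ k = 1"
        proof (rule ccontr)
          assume "a $ k \<noteq> 1" then have "a $ k < 1" using a01 by simp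
          then have "(1 - u) * a $ k < (1 - u)" using u by simp
          then show False using e m2 by linarith
        qed
        moreover have "b $ k = 1"
        proof (rule ccontr)
          assume "b $ k \<noteq> 1" then have "b $ k < 1" using b01 by simp
          then have "u * b $ k < u" using u by simp
          then show False using e m1 by linarith
        qed
        ultimately show ?thesis by simp
      next
        case False
        then have e: "(1 - u) * a $ k + u * b $ k = 0" using xk by (simp add: char_vec_nth)
        have m1: "0 \<le> (1 - u) * a $ k" using a01 u by simp
        have m2: "0 \<le> u * b $ k" using b01 u by simp
        have "a $ k = 0"
        proof (rule ccontr)
          assume "a $ k \<noteq> 0" then have "0 < a $ k" using a01 by simp
          then have "0 < (1 - u) * a $ k" using u by simp
          then show False using e m2 by linarith
        qed
        moreover have "b $ k = 0"
        proof (rule ccontr)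
          assume "b $ k \<noteq> 0" then have "0 < b $ k" using b01 by simp
          then have "0 < u * b $ k" using u by simp
          then show False using e m1 by linarith
        qed
        ultimately show ?thesis by simp
      qed
    qed
    then have "a = b" by (simp add: vec_eq_iff)
    with ab show False by blast
  qed
  show "char_vec I extreme_point_of order_polytope \<omega>"
    unfolding extreme_point_of_def using mem noseg by blast
qed



lemma half_not_int: "(x::real) \<in> \<int> \<Longrightarrow> \<bar>x\<bar> = 1/2 \<Longrightarrow> False"
proof -
  assume "x \<in> \<int>" "\<bar>x\<bar> = 1/2"
  then obtain m where m: "x = of_int m" by (auto elim: Ints_cases)
  have e: "\<bar>real_of_int m\<bar> = 1/2" using \<open>\<bar>x\<bar> = 1/2\<close> unfolding m .
  have "m = 0 \<or> \<bar>m\<bar> \<ge> 1" by linarith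
  then show False
  proof
    assume "m = 0" then show False using e by simp
  next
    assume "\<bar>m\<bar> \<ge> 1"
    then have "real_of_int \<bar>m\<bar> \<ge> 1" by linarith
    then show False using e by simp
  qed
qed

lemma int_seg:
  fixes c d :: real
  assumes "\<And>s. 0 \<le> s \<Longrightarrow> s \<le> 1 \<Longrightarrow> c + s * d \<in> \<int>"
  shows "d = 0"
proof (rule ccontr)
  assume d0: "d \<noteq> 0"
  have c: "c \<in> \<int>" using assms[of 0] by simp
  have "c + d \<in> \<int>" using assms[of 1] by simp
  then have "(c + d) - c \<in> \<int>" using c by (rule Ints_diff)
  then have dI: "d \<in> \<int>" by simp
  then obtain m where m: "d = of_int m" by (auto elim: Ints_cases)
  then have "m \<noteq> 0" using d0 by simp
  then have d1: "\<bar>d\<bar> \<ge> 1" using m by linarith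
  define s where "s = 1 / (2 * \<bar>d\<bar>)"
  have s0: "0 \<le> s" "s \<le> 1" using d1 unfolding s_def by (auto simp: field_simps)
  have "c + s * d \<in> \<int>" using assms[OF s0] .
  then have "(c + s * d) - c \<in> \<int>" using c by (rule Ints_diff)
  then have "s * d \<in> \<int>" by simp
  moreover have "\<bar>s * d\<bar> = 1/2" unfolding s_def using d0 by (simp add: abs_mult)
  ultimately show False by (rule half_not_int)
qed

lemma seg_D:
  fixes C :: "(real ^ 'n::finite) set"
  assumes "convex C" "C \<subseteq> D_tor_lift I" "p \<in> C" "q \<in> C" "i \<in> I \<longleftrightarrow> j \<in> I"
  shows "(q - p) $ i = (q - p) $ j"
proof -
  have "(q $ i - p $ i) - (q $ j - p $ j) = 0"
  proof (rule int_seg)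
    fix s :: real assume s: "0 \<le> s" "s \<le> 1"
    have z: "(1 - s) *\<^sub>R p + s *\<^sub>R q \<in> C" using assms(1,3,4) s unfolding convex_alt by blast
    then have "((1 - s) *\<^sub>R p + s *\<^sub>R q) $ i - ((1 - s) *\<^sub>R p + s *\<^sub>R q) $ j \<in> \<int>"
      using assms(2,5) unfolding D_tor_lift_def by blast
    moreover have "((1 - s) *\<^sub>R p + s *\<^sub>R q) $ i - ((1 - s) *\<^sub>R p + s *\<^sub>R q) $ j
        = (p $ i - p $ j) + s * ((q $ i - p $ i) - (q $ j - p $ j))"
      by (simp add: algebra_simps)
    ultimately show "(p $ i - p $ j) + s * ((q $ i - p $ i) - (q $ j - p $ j)) \<in> \<int>" by simp
  qed
  then show ?thesis by simp
qed

lemma seg_form: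
  fixes C :: "(real ^ 'n::finite) set"
  assumes "convex C" "C \<subseteq> D_tor_lift I" "p \<in> C" "q \<in> C" "i0 \<in> I" "j0 \<notin> I"
  shows "q = p + ((q - p) $ i0) *\<^sub>R char_vec I + ((q - p) $ j0) *\<^sub>R char_vec (- I)"
proof -
  have "q $ k = (p + ((q - p) $ i0) *\<^sub>R char_vec I + ((q - p) $ j0) *\<^sub>R char_vec (- I)) $ k" for k
  proof (cases "k \<in> I")
    case True
    have "(k \<in> I) = (i0 \<in> I)" using True assms(5) by simp
    from seg_D[OF assms(1-4) this] have e: "(q - p) $ k = (q - p) $ i0" .
    have c1: "char_vec I $ k = 1" "char_vec (- I) $ k = 0" using True by (simp_all add: char_vec_nth)
    have "(p + ((q - p) $ i0) *\<^sub>R char_vec I + ((q - p) $ j0) *\<^sub>R char_vec (- I)) $ k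
       = p $ k + (q - p) $ i0 * char_vec I $ k + (q - p) $ j0 * char_vec (- I) $ k" by simp
    also have "\<dots> = p $ k + (q - p) $ k" unfolding c1 e by simp
    finally show ?thesis by simp
  next
    case False
    have "(k \<in> I) = (j0 \<in> I)" using False assms(6) by simp
    from seg_D[OF assms(1-4) this] have e: "(q - p) $ k = (q - p) $ j0" .
    have c1: "char_vec I $ k = 0" "char_vec (- I) $ k = 1" using False by (simp_all add: char_vec_nth)
    have "(p + ((q - p) $ i0) *\<^sub>R char_vec I + ((q - p) $ j0) *\<^sub>R char_vec (- I)) $ k
       = p $ k + (q - p) $ i0 * char_vec I $ k + (q - p) $ j0 * char_vec (- I) $ k" by simp
    also have "\<dots> = p $ k + (q - p) $ k" unfolding c1 e by simp
    finally show ?thesis by simp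
  qed
  then show ?thesis unfolding vec_eq_iff by blast
qed

lemma dim_le2:
  fixes C :: "(real ^ 'n::finite) set"
  assumes "convex C" "C \<subseteq> D_tor_lift I" "I \<noteq> {}" "I \<noteq> UNIV"
  shows "aff_dim C \<le> 2"
proof (cases "C = {}")
  case True then show ?thesis by simp
next
  case False
  then obtain p where p: "p \<in> C" by blast
  obtain i0 where i0: "i0 \<in> I" using assms(3) by blast
  obtain j0 where j0: "j0 \<notin> I" using assms(4) by blast
  define T where "T = {p, p + char_vec I, p + char_vec (- I)}"
  have "C \<subseteq> affine hull T"
  proof
    fix q assume q: "q \<in> C"
    define u where "u = (q - p) $ i0"
    define w where "w = (q - p) $ j0"
    have qf: "q = p + u *\<^sub>R char_vec I + w *\<^sub>R char_vec (- I)"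
      unfolding u_def w_def by (rule seg_form[OF assms(1,2) p q i0 j0])
    have "q = (1 - u - w) *\<^sub>R p + u *\<^sub>R (p + char_vec I) + w *\<^sub>R (p + char_vec (- I))"
      unfolding qf by (simp add: algebra_simps)
    then show "q \<in> affine hull T" unfolding T_def affine_hull_3 by force
  qed
  then have "aff_dim C \<le> aff_dim (affine hull T)" by (rule aff_dim_subset)
  also have "\<dots> = aff_dim T" by simp
  also have "\<dots> \<le> of_nat (card T) - 1" by (rule aff_dim_le_card) (simp add: T_def)
  also have "\<dots> \<le> 2"
  proof -
    have "card T \<le> 3" unfolding T_def by (simp add: card_insert_if)
    then show ?thesis by simp
  qed
  finally show ?thesis .
qed



lemma K_closure:
  fixes E :: "('n::finite \<times> 'n) set"
  assumes sy: "sym E" and g: "good E g" and up: "\<forall>i j. (i,j) \<in> ori E g \<longrightarrow> i \<in> I \<longrightarrow> j \<in> I"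
    and cls: "ori E g \<in> toric_class \<omega>"
    and ab: "1/2 \<le> a" "a \<le> 3/4" "1/8 \<le> b" "b \<le> 1/4"
  shows "a *\<^sub>R char_vec I + b *\<^sub>R char_vec (- I) \<in> closure (toric_chamber_lift E \<omega>)"
proof -
  define x where "x = a *\<^sub>R char_vec I + b *\<^sub>R char_vec (- I)"
  define G :: "real ^ 'n" where "G = (\<chi> k. g k)"
  have xk: "x $ k = (if k \<in> I then a else b)" for k unfolding x_def by (simp add: char_vec_nth)
  have w: "(i,j) \<in> E \<Longrightarrow> g i \<noteq> g j" for i j using g unfolding good_def by blast
  have s: "(i,j) \<in> E \<Longrightarrow> (j,i) \<in> E" for i j using sy unfolding sym_def by blast
  have "\<forall>e>0. \<exists>y\<in>toric_chamber_lift E \<omega>. dist y x < e"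
  proof (intro allI impI)
    fix e :: real assume e: "e > 0"
    define M where "M = norm G + 1"
    have M: "M > 0" "norm G < M" unfolding M_def using norm_ge_zero[of G] by linarith+
    define t where "t = min e (1/16) / (2 * M)"
    have t0: "t > 0" unfolding t_def using e M by simp
    have tG: "t * norm G \<le> min e (1/16) / 2"
    proof -
      have "t * norm G \<le> t * M" using t0 M by simp
      also have "\<dots> = min e (1/16) / 2" unfolding t_def using M by (simp add: field_simps)
      finally show ?thesis .
    qed
    define y where "y = x + t *\<^sub>R G"
    have yk: "y $ k = x $ k + t * g k" for k unfolding y_def G_def by simp
    have small: "\<bar>t * g k\<bar> \<le> 1/32" for k
    proof -
      have "\<bar>t * g k\<bar> = t * \<bar>G $ k\<bar>" using t0 unfolding G_def by (simp add: abs_mult)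
      also have "\<dots> \<le> t * norm G" using t0 component_le_norm_cart[of G k] by (simp add: mult_left_mono)
      finally show ?thesis using tG by linarith
    qed
    have rngI: "7/16 \<le> y $ k \<and> y $ k \<le> 13/16" if "k \<in> I" for k
      using yk[of k] xk[of k] that small[of k] ab by (auto simp: abs_le_iff)
    have rngJ: "1/16 \<le> y $ k \<and> y $ k \<le> 5/16" if "k \<notin> I" for k
      using yk[of k] xk[of k] that small[of k] ab by (auto simp: abs_le_iff)
    have fr: "frac (y $ k) = y $ k" for k
    proof (cases "k \<in> I")
      case True then show ?thesis using rngI[OF True] by (simp add: frac_eq)
    next
      case False then show ?thesis using rngJ[OF False] by (simp add: frac_eq)
    qed
    have key: "y $ i < y $ j \<longleftrightarrow> g i < g j" and neq: "y $ i \<noteq> y $ j" if ij: "(i,j) \<in> E" for i j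
    proof -
      have "(y $ i < y $ j \<longleftrightarrow> g i < g j) \<and> y $ i \<noteq> y $ j"
      proof (cases "i \<in> I \<longleftrightarrow> j \<in> I")
        case True
        then have "y $ i - y $ j = t * (g i - g j)" using yk[of i] yk[of j] xk[of i] xk[of j]
          by (simp add: algebra_simps)
        moreover have "g i \<noteq> g j" using w[OF ij] .
        ultimately show ?thesis using t0
          by (smt (verit, best) mult_pos_pos mult_minus_right)
      next
        case False
        show ?thesis
        proof (cases "i \<in> I")
          case True
          then have j: "j \<notin> I" using False by blast
          have "\<not> g i < g j" using up ij True j by (auto simp: mem_ori)
          moreover have "y $ j < y $ i" using rngI[OF True] rngJ[OF j] by linarith
          ultimately show ?thesis by linarith
        next
          case iI: False
          then have j: "j \<in> I" using False by blast
          have "\<not> g j < g i" using up s[OF ij] iI j by (auto simp: mem_ori)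
          then have "g i < g j" using w[OF ij] by linarith
          moreover have "y $ i < y $ j" using rngI[OF j] rngJ[OF iI] by linarith
          ultimately show ?thesis by linarith
        qed
      qed
      then show "y $ i < y $ j \<longleftrightarrow> g i < g j" "y $ i \<noteq> y $ j" by auto
    qed
    have po: "point_orientation E y = ori E g"
      unfolding point_orientation_def ori_def using key fr by auto
    have "y \<in> toric_chamber_lift E \<omega>"
      unfolding toric_chamber_lift_def using po cls neq fr by auto
    moreover have "dist y x < e"
    proof -
      have "dist y x = t * norm G" unfolding y_def dist_norm using t0 by simp
      also have "\<dots> < e" using tG e by linarith
      finally show ?thesis .
    qed
    ultimately show "\<exists>y\<in>toric_chamber_lift E \<omega>. dist y x < e" by blast
  qed
  then show ?thesis unfolding x_def[symmetric] closure_approachable by blast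
qed


lemma xab_nth: "(a *\<^sub>R char_vec I + b *\<^sub>R char_vec (- I)) $ k = (if k \<in> I then a else b)"
  by (simp add: char_vec_nth)

lemma not_coll:
  fixes I :: "'n::finite set"
  assumes i0: "i0 \<in> I" and j0: "j0 \<notin> I" and that: "a \<noteq> a'" "b \<noteq> b'"
  shows "\<not> collinear {a *\<^sub>R char_vec I + b *\<^sub>R char_vec (- I),
                     a' *\<^sub>R char_vec I + b *\<^sub>R char_vec (- I),
                     a *\<^sub>R char_vec I + b' *\<^sub>R char_vec (- I)}" (is "\<not> collinear {?p, ?q, ?r}")
proof
  assume "collinear {?p, ?q, ?r}"
  then obtain u where u: "\<forall>x\<in>{?p, ?q, ?r}. \<forall>y\<in>{?p, ?q, ?r}. \<exists>c. x - y = c *\<^sub>R u"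
    unfolding collinear_def by blast
  obtain c1 where c1: "?q - ?p = c1 *\<^sub>R u" using u by blast
  obtain c2 where c2: "?r - ?p = c2 *\<^sub>R u" using u by blast
  have e1: "a' - a = c1 * u $ i0" using arg_cong[OF c1, of "\<lambda>v. v $ i0"] i0 by (simp add: xab_nth char_vec_nth)
  have e2: "0 = c1 * u $ j0" using arg_cong[OF c1, of "\<lambda>v. v $ j0"] j0 by (simp add: xab_nth char_vec_nth)
  have e3: "b' - b = c2 * u $ j0" using arg_cong[OF c2, of "\<lambda>v. v $ j0"] j0 by (simp add: xab_nth char_vec_nth)
  have "c1 \<noteq> 0" using e1 that by auto
  then have "u $ j0 = 0" using e2 by simp
  then show False using e3 that by simp
qed

lemma rhs_to_lhs:
  fixes E :: "('n::finite \<times> 'n) set"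
  assumes sy: "sym E" and ir: "irrefl E" and ac: "\<omega> \<in> Acyc E" and cl: "\<omega>' \<in> toric_class \<omega>"
    and up: "\<forall>i j. (i,j) \<in> \<omega>' \<longrightarrow> i \<in> I \<longrightarrow> j \<in> I" and ne: "I \<noteq> {}" "I \<noteq> UNIV"
  shows "has_dim (closure (toric_chamber_lift E \<omega>) \<inter> D_tor_lift I) 2"
proof -
  obtain g0 where g0: "good E g0" "\<omega> = ori E g0" using base_real[OF ir ac] by blast
  obtain g where g: "good E g" "\<omega>' = ori E g"
    using realizable_class[OF sy ir g0(1)] cl g0(2) by blast
  obtain i0 where i0: "i0 \<in> I" using ne by blast
  obtain j0 where j0: "j0 \<notin> I" using ne by blast
  define K where "K = {a *\<^sub>R char_vec I + b *\<^sub>R char_vec (- I) | a b. 1/2 \<le> a \<and> a \<le> 3/4 \<and> 1/8 \<le> b \<and> b \<le> (1/4::real)}"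
  let ?S = "closure (toric_chamber_lift E \<omega>) \<inter> D_tor_lift I"
  have KD: "K \<subseteq> D_tor_lift I"
  proof
    fix x assume "x \<in> K"
    then obtain a b where x: "x = a *\<^sub>R char_vec I + b *\<^sub>R char_vec (- I)" unfolding K_def by blast
    show "x \<in> D_tor_lift I" unfolding D_tor_lift_def x by (auto simp: char_vec_nth)
  qed
  have KS: "K \<subseteq> ?S"
  proof
    fix x assume x: "x \<in> K"
    then obtain a b where xx: "x = a *\<^sub>R char_vec I + b *\<^sub>R char_vec (- I)" and ab: "1/2 \<le> a" "a \<le> 3/4" "1/8 \<le> b" "b \<le> 1/4"
      unfolding K_def by blast
    have "x \<in> closure (toric_chamber_lift E \<omega>)"
      unfolding xx by (rule K_closure[OF sy g(1) up[unfolded g(2)] cl[unfolded g(2)] ab])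
    then show "x \<in> ?S" using KD x by blast
  qed
  have cK: "convex K"
    unfolding convex_def
  proof (intro ballI allI impI)
    fix x y and u v :: real assume x: "x \<in> K" and y: "y \<in> K" and uv: "0 \<le> u" "0 \<le> v" "u + v = 1"
    obtain a b where xx: "x = a *\<^sub>R char_vec I + b *\<^sub>R char_vec (- I)" and ab: "1/2 \<le> a" "a \<le> 3/4" "1/8 \<le> b" "b \<le> 1/4"
      using x unfolding K_def by blast
    obtain a' b' where yy: "y = a' *\<^sub>R char_vec I + b' *\<^sub>R char_vec (- I)" and ab': "1/2 \<le> a'" "a' \<le> 3/4" "1/8 \<le> b'" "b' \<le> 1/4"
      using y unfolding K_def by blast
    have eq: "u *\<^sub>R x + v *\<^sub>R y = (u * a + v * a') *\<^sub>R char_vec I + (u * b + v * b') *\<^sub>R char_vec (- I)"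
      unfolding xx yy by (simp add: algebra_simps)
    have m1: "u * (1/2) \<le> u * a" "v * (1/2) \<le> v * a'" "u * a \<le> u * (3/4)" "v * a' \<le> v * (3/4)"
      by (rule mult_left_mono[OF ab(1) uv(1)], rule mult_left_mono[OF ab'(1) uv(2)],
          rule mult_left_mono[OF ab(2) uv(1)], rule mult_left_mono[OF ab'(2) uv(2)])
    have m2: "u * (1/8) \<le> u * b" "v * (1/8) \<le> v * b'" "u * b \<le> u * (1/4)" "v * b' \<le> v * (1/4)"
      by (rule mult_left_mono[OF ab(3) uv(1)], rule mult_left_mono[OF ab'(3) uv(2)],
          rule mult_left_mono[OF ab(4) uv(1)], rule mult_left_mono[OF ab'(4) uv(2)])
    have "1/2 \<le> u * a + v * a'" "u * a + v * a' \<le> 3/4" "1/8 \<le> u * b + v * b'" "u * b + v * b' \<le> 1/4"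
      using m1 m2 uv(3) by linarith+
    then show "u *\<^sub>R x + v *\<^sub>R y \<in> K" unfolding eq K_def by blast
  qed
  have le2: "aff_dim C \<le> 2" if "convex C" "C \<subseteq> ?S" for C
    using dim_le2[OF that(1) _ ne] that(2) by blast
  have "aff_dim K \<ge> 2"
  proof -
    let ?p = "(1/2::real) *\<^sub>R char_vec I + (1/4::real) *\<^sub>R char_vec (- I)"
    let ?q = "(3/4::real) *\<^sub>R char_vec I + (1/4::real) *\<^sub>R char_vec (- I)"
    let ?r = "(1/2::real) *\<^sub>R char_vec I + (1/8::real) *\<^sub>R char_vec (- I)"
    have nc: "\<not> collinear {?p, ?q, ?r}" by (rule not_coll[OF i0 j0]) auto
    then have nn: "\<not> (?p = ?q \<or> ?p = ?r \<or> ?q = ?r \<or> affine_dependent {?p, ?q, ?r})"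
      unfolding collinear_3_eq_affine_dependent .
    then have dist: "?p \<noteq> ?q" "?p \<noteq> ?r" "?q \<noteq> ?r" and ind: "\<not> affine_dependent {?p, ?q, ?r}"
      by blast+
    have "of_nat (card {?p, ?q, ?r}) = aff_dim {?p, ?q, ?r} + 1" by (rule aff_dim_affine_independent[OF ind])
    moreover have "card {?p, ?q, ?r} = 3" using dist by simp
    ultimately have "aff_dim {?p, ?q, ?r} = 2" by simp
    moreover have "{?p, ?q, ?r} \<subseteq> K" unfolding K_def by force
    ultimately show ?thesis using aff_dim_subset by metis
  qed
  then have "aff_dim K = 2" using le2[OF cK KS] by simp
  then show ?thesis unfolding has_dim_def using cK KS le2 by blast
qed



lemma pick_real:
  fixes X :: "real set"
  assumes "countable X" "a < b"
  shows "\<exists>s. a < s \<and> s < b \<and> s \<notin> X"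
proof (rule ccontr)
  assume "\<not> ?thesis"
  then have "{a<..<b} \<subseteq> X" by auto
  then have "countable {a<..<b}" using assms(1) countable_subset by blast
  then show False using uncountable_open_interval assms(2) by blast
qed

lemma cnt_lin:
  fixes \<alpha> \<beta> :: real
  assumes "\<alpha> \<noteq> 0 \<or> \<beta> \<noteq> 0"
  shows "countable {c. \<alpha> + c * \<beta> = 0}"
proof (cases "\<beta> = 0")
  case True
  then have "{c. \<alpha> + c * \<beta> = 0} = {}" using assms by auto
  then show ?thesis by simp
next
  case False
  then have "{c. \<alpha> + c * \<beta> = 0} \<subseteq> {- \<alpha> / \<beta>}" by (auto simp: field_simps)
  then show ?thesis using countable_subset by blast
qed

lemma cnt_int:
  fixes \<alpha> \<beta> :: real
  assumes "\<beta> \<noteq> 0"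
  shows "countable {s. \<alpha> + s * \<beta> \<in> \<int>}"
proof -
  have "{s. \<alpha> + s * \<beta> \<in> \<int>} \<subseteq> (\<lambda>z. (z - \<alpha>) / \<beta>) ` \<int>"
  proof
    fix s assume "s \<in> {s. \<alpha> + s * \<beta> \<in> \<int>}"
    then have "\<alpha> + s * \<beta> \<in> \<int>" by simp
    moreover have "s = ((\<alpha> + s * \<beta>) - \<alpha>) / \<beta>" using assms by simp
    ultimately show "s \<in> (\<lambda>z. (z - \<alpha>) / \<beta>) ` \<int>" by blast
  qed
  moreover have "countable ((\<lambda>z. (z - \<alpha>) / \<beta>) ` \<int>)" using countable_int by blast
  ultimately show ?thesis using countable_subset by blast
qed

lemma coll_line:
  fixes p v :: "'a::real_vector"
  shows "collinear {p, p + a *\<^sub>R v, p + b *\<^sub>R v}"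
proof -
  have all: "\<forall>x\<in>{p, p + a *\<^sub>R v, p + b *\<^sub>R v}. \<exists>c. x = p + c *\<^sub>R v"
    by (auto intro: exI[of _ 0] exI[of _ a] exI[of _ b])
  have "\<forall>x\<in>{p, p + a *\<^sub>R v, p + b *\<^sub>R v}. \<forall>y\<in>{p, p + a *\<^sub>R v, p + b *\<^sub>R v}. \<exists>c. x - y = c *\<^sub>R v"
  proof (intro ballI)
    fix x y assume "x \<in> {p, p + a *\<^sub>R v, p + b *\<^sub>R v}" "y \<in> {p, p + a *\<^sub>R v, p + b *\<^sub>R v}"
    then obtain cx cy where "x = p + cx *\<^sub>R v" "y = p + cy *\<^sub>R v" using all by blast
    then have "x - y = (cx - cy) *\<^sub>R v" by (simp add: algebra_simps)
    then show "\<exists>c. x - y = c *\<^sub>R v" by blast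
  qed
  then show ?thesis unfolding collinear_def by blast
qed

lemma frac_near:
  fixes x y d :: real
  assumes "\<bar>y - x\<bar> < d" "d \<le> frac x" "d \<le> 1 - frac x"
  shows "\<bar>frac y - frac x\<bar> < d"
proof -
  have fx: "frac x = x - of_int \<lfloor>x\<rfloor>" by (simp add: frac_def)
  have "\<lfloor>y\<rfloor> = \<lfloor>x\<rfloor>" unfolding floor_eq_iff using assms fx by (auto simp: abs_less_iff)
  then show ?thesis using assms(1) by (simp add: frac_def)
qed

lemma frac_eq_int:
  fixes x y :: real
  assumes "frac x = frac y"
  shows "x - y \<in> \<int>"
proof -
  have "x - y = of_int (\<lfloor>x\<rfloor> - \<lfloor>y\<rfloor>)" using assms by (simp add: frac_def)
  then show ?thesis by simp
qed


lemma lhs_to_rhs: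
  fixes E :: "('n::finite \<times> 'n) set"
  assumes sy: "sym E" and ir: "irrefl E" and ne: "I \<noteq> {}" "I \<noteq> UNIV"
    and cC: "convex C" and CS: "C \<subseteq> closure (toric_chamber_lift E \<omega>) \<inter> D_tor_lift I"
    and dC: "aff_dim C = 2"
  shows "\<exists>\<omega>'\<in>toric_class \<omega>. \<forall>i j. (i,j) \<in> \<omega>' \<longrightarrow> i \<in> I \<longrightarrow> j \<in> I"
proof -
  obtain i0 where i0: "i0 \<in> I" using ne by blast
  obtain j0 where j0: "j0 \<notin> I" using ne by blast
  have CD: "C \<subseteq> D_tor_lift I" using CS by blast
  obtain B where B: "B \<subseteq> C" "\<not> affine_dependent B" "of_nat (card B) = aff_dim C + 1"
    using aff_dim_inner_basis_exists by blast
  have "card B = 3" using B(3) dC by simp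
  then obtain p q r where pqr: "B = {p,q,r}" "p \<noteq> q" "q \<noteq> r" "p \<noteq> r" unfolding card_3_iff by blast
  have nc: "\<not> collinear {p,q,r}" using B(2) pqr collinear_3_eq_affine_dependent by metis
  have pC: "p \<in> C" and qC: "q \<in> C" and rC: "r \<in> C" using B(1) pqr(1) by auto
  define u1 where "u1 = (q - p) $ i0"
  define w1 where "w1 = (q - p) $ j0"
  define u2 where "u2 = (r - p) $ i0"
  define w2 where "w2 = (r - p) $ j0"
  have qf: "q = p + u1 *\<^sub>R char_vec I + w1 *\<^sub>R char_vec (- I)"
    unfolding u1_def w1_def by (rule seg_form[OF cC CD pC qC i0 j0])
  have rf: "r = p + u2 *\<^sub>R char_vec I + w2 *\<^sub>R char_vec (- I)"
    unfolding u2_def w2_def by (rule seg_form[OF cC CD pC rC i0 j0])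
  have nd1: "u1 \<noteq> 0 \<or> u2 \<noteq> 0"
  proof (rule ccontr)
    assume "\<not> ?thesis"
    then have "q = p + w1 *\<^sub>R char_vec (- I)" "r = p + w2 *\<^sub>R char_vec (- I)" using qf rf by auto
    then show False using nc coll_line by metis
  qed
  have nd2: "w1 \<noteq> 0 \<or> w2 \<noteq> 0"
  proof (rule ccontr)
    assume "\<not> ?thesis"
    then have "q = p + u1 *\<^sub>R char_vec I" "r = p + u2 *\<^sub>R char_vec I" using qf rf by auto
    then show False using nc coll_line by metis
  qed
  have nd3: "(u1 - w1) \<noteq> 0 \<or> (u2 - w2) \<noteq> 0"
  proof (rule ccontr)
    assume "\<not> ?thesis"
    then have "w1 = u1" "w2 = u2" by auto
    then have "q = p + u1 *\<^sub>R (char_vec I + char_vec (- I))" "r = p + u2 *\<^sub>R (char_vec I + char_vec (- I))"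
      using qf rf by (simp_all add: algebra_simps)
    then show False using nc coll_line by metis
  qed
  have "countable ({c. u1 + c * u2 = 0} \<union> {c. w1 + c * w2 = 0} \<union> {c. (u1 - w1) + c * (u2 - w2) = 0})"
    using cnt_lin[OF nd1] cnt_lin[OF nd2] cnt_lin[OF nd3] by blast
  from pick_real[OF this, of 0 "1/2"] obtain c where c0: "0 < c" "c < 1/2"
    and cn: "c \<notin> {c. u1 + c * u2 = 0} \<union> {c. w1 + c * w2 = 0} \<union> {c. (u1 - w1) + c * (u2 - w2) = 0}" by auto
  have c: "0 < c" "c < 1/2" "u1 + c * u2 \<noteq> 0" "w1 + c * w2 \<noteq> 0" "(u1 - w1) + c * (u2 - w2) \<noteq> 0"
    using c0 cn by auto
  define U where "U = u1 + c * u2"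
  define W where "W = w1 + c * w2"
  have U0: "U \<noteq> 0" using c(3) unfolding U_def .
  have W0: "W \<noteq> 0" using c(4) unfolding W_def .
  have "U - W = (u1 - w1) + c * (u2 - w2)" unfolding U_def W_def by (simp add: algebra_simps)
  then have UW0: "U - W \<noteq> 0" using c(5) by simp
  have cs: "countable ({s. p $ i0 + s * U \<in> \<int>} \<union> {s. p $ j0 + s * W \<in> \<int>} \<union> {s. (p $ i0 - p $ j0) + s * (U - W) \<in> \<int>})"
    using cnt_int[OF U0, of "p $ i0"] cnt_int[OF W0, of "p $ j0"] cnt_int[OF UW0, of "p $ i0 - p $ j0"]
    by (simp only: countable_Un_iff)
  obtain s where s: "0 < s" "s < 1/2" "p $ i0 + s * U \<notin> \<int>" "p $ j0 + s * W \<notin> \<int>"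
      "(p $ i0 - p $ j0) + s * (U - W) \<notin> \<int>"
    using pick_real[OF cs, of 0 "1/2"] by auto
  define z where "z = (1 - s - s * c) *\<^sub>R p + s *\<^sub>R q + (s * c) *\<^sub>R r"
  have "z \<in> convex hull {p,q,r}"
  proof -
    have "0 \<le> 1 - s - s * c"
    proof -
      have "s * c \<le> s * (1/2)" using s c by (intro mult_left_mono) auto
      then show ?thesis using s by linarith
    qed
    moreover have "0 \<le> s" "0 \<le> s * c" using s c by auto
    moreover have "(1 - s - s * c) + s + s * c = 1" by simp
    ultimately show ?thesis unfolding convex_hull_3 z_def by blast
  qed
  moreover have "convex hull {p,q,r} \<subseteq> C" using pC qC rC cC by (intro hull_minimal) auto
  ultimately have zC: "z \<in> C" by blast
  have zcl: "z \<in> closure (toric_chamber_lift E \<omega>)" and zD: "z \<in> D_tor_lift I" using zC CS by auto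
  have zi0: "z $ i0 = p $ i0 + s * U"
    unfolding z_def U_def using arg_cong[OF qf, of "\<lambda>v. v $ i0"] arg_cong[OF rf, of "\<lambda>v. v $ i0"] i0
    by (simp add: char_vec_nth algebra_simps)
  have zj0: "z $ j0 = p $ j0 + s * W"
    unfolding z_def W_def using arg_cong[OF qf, of "\<lambda>v. v $ j0"] arg_cong[OF rf, of "\<lambda>v. v $ j0"] j0
    by (simp add: char_vec_nth algebra_simps)
  define \<alpha> where "\<alpha> = frac (z $ i0)"
  define \<beta> where "\<beta> = frac (z $ j0)"
  have A: "z $ i0 \<notin> \<int>" using s(3) zi0 by simp
  have Bn: "z $ j0 \<notin> \<int>" using s(4) zj0 by simp
  have AB: "z $ i0 - z $ j0 \<notin> \<int>" using s(5) zi0 zj0 by (simp add: algebra_simps)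
  have a01: "0 < \<alpha>" "\<alpha> < 1" unfolding \<alpha>_def using A frac_lt_1 by auto
  have b01: "0 < \<beta>" "\<beta> < 1" unfolding \<beta>_def using Bn frac_lt_1 by auto
  have abne: "\<alpha> \<noteq> \<beta>" unfolding \<alpha>_def \<beta>_def using AB frac_eq_int by blast
  have fI: "frac (z $ k) = \<alpha>" if "k \<in> I" for k
  proof -
    have "z $ k - z $ i0 \<in> \<int>" using zD that i0 unfolding D_tor_lift_def by blast
    then have "frac (z $ i0 + (z $ k - z $ i0)) = frac (z $ i0)" by (rule frac_add_int_right)
    then show ?thesis unfolding \<alpha>_def by simp
  qed
  have fJ: "frac (z $ k) = \<beta>" if "k \<notin> I" for k
  proof -
    have "z $ k - z $ j0 \<in> \<int>" using zD that j0 unfolding D_tor_lift_def by blast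
    then have "frac (z $ j0 + (z $ k - z $ j0)) = frac (z $ j0)" by (rule frac_add_int_right)
    then show ?thesis unfolding \<beta>_def by simp
  qed
  define \<delta> where "\<delta> = min (min \<alpha> (1 - \<alpha>)) (min (min \<beta> (1 - \<beta>)) (\<bar>\<alpha> - \<beta>\<bar> / 2))"
  have d0: "\<delta> > 0" unfolding \<delta>_def using a01 b01 abne by auto
  have dle: "\<delta> \<le> \<alpha>" "\<delta> \<le> 1 - \<alpha>" "\<delta> \<le> \<beta>" "\<delta> \<le> 1 - \<beta>" "\<delta> \<le> \<bar>\<alpha> - \<beta>\<bar> / 2"
    unfolding \<delta>_def by (simp_all add: min_def)
  obtain y where yC: "y \<in> toric_chamber_lift E \<omega>" and yd: "dist y z < \<delta>"
    using zcl d0 unfolding closure_approachable by blast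
  have comp: "\<bar>y $ k - z $ k\<bar> < \<delta>" for k
  proof -
    have "\<bar>(y - z) $ k\<bar> \<le> norm (y - z)" by (rule component_le_norm_cart)
    then show ?thesis using yd unfolding dist_norm by simp
  qed
  define g where "g k = frac (y $ k)" for k
  have gI: "\<bar>g k - \<alpha>\<bar> < \<delta>" if "k \<in> I" for k
    unfolding g_def using frac_near[OF comp[of k]] fI[OF that] dle by simp
  have gJ: "\<bar>g k - \<beta>\<bar> < \<delta>" if "k \<notin> I" for k
    unfolding g_def using frac_near[OF comp[of k]] fJ[OF that] dle by simp
  have yne: "\<And>i j. (i,j) \<in> E \<Longrightarrow> frac (y $ i) \<noteq> frac (y $ j)" and ycl: "point_orientation E y \<in> toric_class \<omega>"
    using yC unfolding toric_chamber_lift_def by auto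
  have g01: "0 \<le> g k" "g k < 1" for k unfolding g_def using frac_lt_1 by auto
  have good: "good E g"
    unfolding good_def
  proof (intro allI impI conjI)
    fix i j assume "(i,j) \<in> E"
    then show "g i \<noteq> g j" unfolding g_def using yne by blast
    show "\<bar>g i - g j\<bar> < 1" using g01[of i] g01[of j] by linarith
  qed
  have po: "point_orientation E y = ori E g" unfolding point_orientation_def ori_def g_def by simp
  have cl0: "(\<omega>, ori E g) \<in> (source_sink_step \<union> source_sink_step\<inverse>)\<^sup>*"
    using ycl po unfolding toric_class_def by simp
  show ?thesis
  proof (cases "\<beta> < \<alpha>")
    case True
    have "\<forall>i j. (i,j) \<in> ori E g \<longrightarrow> i \<in> I \<longrightarrow> j \<in> I"
    proof (intro allI impI)
      fix i j assume ij: "(i,j) \<in> ori E g" and i: "i \<in> I"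
      show "j \<in> I"
      proof (rule ccontr)
        assume j: "j \<notin> I"
        have "g i < g j" using ij by (simp add: mem_ori)
        moreover have "\<bar>g i - \<alpha>\<bar> < \<delta>" "\<bar>g j - \<beta>\<bar> < \<delta>" using gI[OF i] gJ[OF j] .
        ultimately show False using dle(5) True by (auto simp: abs_less_iff)
      qed
    qed
    moreover have "ori E g \<in> toric_class \<omega>" using cl0 unfolding toric_class_def by simp
    ultimately show ?thesis by blast
  next
    case False
    then have ab: "\<alpha> < \<beta>" using abne by linarith
    have dc: "\<forall>i j. (i,j) \<in> E \<longrightarrow> i \<in> I \<longrightarrow> j \<notin> I \<longrightarrow> g i < g j"
    proof (intro allI impI)
      fix i j assume "(i,j) \<in> E" "i \<in> I" "j \<notin> I"
      then have "\<bar>g i - \<alpha>\<bar> < \<delta>" "\<bar>g j - \<beta>\<bar> < \<delta>" using gI gJ by auto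
      then show "g i < g j" using dle(5) ab by (auto simp: abs_less_iff)
    qed
    define \<omega>' where "\<omega>' = ori E (\<lambda>i. g i + (if i \<in> I then 1 else 0))"
    have st: "(ori E g, \<omega>') \<in> source_sink_step\<^sup>*"
      unfolding \<omega>'_def using lift_set[OF sy ir, of I] good dc by blast
    then have "(ori E g, \<omega>') \<in> (source_sink_step \<union> source_sink_step\<inverse>)\<^sup>*"
      using rtrancl_mono[of source_sink_step "source_sink_step \<union> source_sink_step\<inverse>"] by blast
    then have "\<omega>' \<in> toric_class \<omega>" using cl0 unfolding toric_class_def by (simp add: rtrancl_trans)
    moreover have "\<forall>i j. (i,j) \<in> \<omega>' \<longrightarrow> i \<in> I \<longrightarrow> j \<in> I"
    proof (intro allI impI)
      fix i j assume ij: "(i,j) \<in> \<omega>'" and i: "i \<in> I"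
      show "j \<in> I"
      proof (rule ccontr)
        assume j: "j \<notin> I"
        have "g i + 1 < g j" using ij i j unfolding \<omega>'_def by (simp add: mem_ori)
        then show False using g01[of i] g01[of j] by linarith
      qed
    qed
    ultimately show ?thesis by blast
  qed
qed


theorem mainTheorem13:
  fixes E :: "('n::finite \<times> 'n) set" and \<omega> :: "('n \<times> 'n) set" and I :: "'n set"
  assumes "simple_graph E" and "\<omega> \<in> Acyc E"
  shows "toric_filter E \<omega> I \<longleftrightarrow>
         (\<exists>\<omega>' \<in> toric_class \<omega>. char_vec I extreme_point_of order_polytope \<omega>')"
proof -
  have sy: "sym E" and ir: "irrefl E" using assms(1) unfolding simple_graph_def by auto
  have rf: "\<omega> \<in> toric_class \<omega>" unfolding toric_class_def by simp
  show ?thesis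
  proof
    assume tf: "toric_filter E \<omega> I"
    have "\<exists>\<omega>'\<in>toric_class \<omega>. \<forall>i j. (i,j) \<in> \<omega>' \<longrightarrow> i \<in> I \<longrightarrow> j \<in> I"
    proof (cases "I = {} \<or> I = UNIV")
      case True then show ?thesis using rf by blast
    next
      case False
      then have "has_dim (closure (toric_chamber_lift E \<omega>) \<inter> D_tor_lift I) 2"
        using tf unfolding toric_filter_def by blast
      then obtain C where C: "convex C" "C \<subseteq> closure (toric_chamber_lift E \<omega>) \<inter> D_tor_lift I" "aff_dim C = 2"
        unfolding has_dim_def by blast
      have ne: "I \<noteq> {}" "I \<noteq> UNIV" using False by auto
      show ?thesis by (rule lhs_to_rhs[OF sy ir ne C])
    qed
    then show "\<exists>\<omega>'\<in>toric_class \<omega>. char_vec I extreme_point_of order_polytope \<omega>'"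
      using extreme_char by blast
  next
    assume "\<exists>\<omega>'\<in>toric_class \<omega>. char_vec I extreme_point_of order_polytope \<omega>'"
    then obtain \<omega>' where cl: "\<omega>' \<in> toric_class \<omega>" and up: "\<forall>i j. (i,j) \<in> \<omega>' \<longrightarrow> i \<in> I \<longrightarrow> j \<in> I"
      using extreme_char by blast
    show "toric_filter E \<omega> I"
    proof (cases "I = {} \<or> I = UNIV")
      case True then show ?thesis unfolding toric_filter_def by blast
    next
      case False
      have ne: "I \<noteq> {}" "I \<noteq> UNIV" using False by auto
      have "has_dim (closure (toric_chamber_lift E \<omega>) \<inter> D_tor_lift I) 2"
        by (rule rhs_to_lhs[OF sy ir assms(2) cl up ne])
      then show ?thesis unfolding toric_filter_def using ne by blast
    qed
  qed
qed

end
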